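(* Let the channel gains form an $m$-dependent frequency-selective channel with $K=N$, and assume each $|h_{n,n,k}|$ has a continuous distribution. Let $\varepsilon>0$ and let the M-FSIG parameter be an integer $M=M_N$ with $M\ge(e+\varepsilon)(m+1)\ln N$ and $M/N\to0$. For a profile $\mathbf a$ let $N_c(\mathbf a)$ be its number of sharing users. Then $\max_{\mathbf a^*\in\mathcal P_e}N_c(\mathbf a^* )/N\to0$ in probability as $N\to\infty$ (with the convention that the maximum over an empty set is $0$); in particular, for any PNE $\mathbf a^*$, $N_c(\mathbf a^* )/N\to0$ in probability.
   Context: $N$ users, $K=N$ REs, complex channel gains $h_{n_1,n_2,k}$. Given an integer $m\ge0$ not depending on $N$, they form an $m$-dependent frequency-selective channel if: (i) for each pair $(n_1,n_2)$, $h_{n_1,n_2,1},\dots,h_{n_1,n_2,K}$ are identically distributed and $\Pr(|h_{n_1,n_2,k}|=0)=0$; (ii) the vectors $(h_{n_1,n_2,k})_{k=1}^K$ for distinct pairs are mutually independent; (iii) for each pair, $(h_{n_1,n_2,k})_k$ is $m$-dependent: for every $s$, $(h_{n_1,n_2,k})_{k\le s}$ is independent of $(h_{n_1,n_2,k})_{k>s+m}$. Powers $P_n>0$, noise $N_0>0$, profiles $\mathbf a\in\{1,\dots,K\}^N$, interference $I_k(\mathbf a_{-n})=\sum_{m'\ne n:\,a_{m'}=k}|h_{m',n,k}|^2P_{m'}$. $|h_{n,n,(j)}|$ is the $j$-th smallest of $|h_{n,n,1}|,\dots,|h_{n,n,K}|$. M-FSIG with integer parameter $M$: utility $u_n(\mathbf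 a)=\log_2\!\big(1+\frac{P_n|h_{n,n,(K-M+1)}|^2}{N_0+I_{a_n}(\mathbf a_{-n})}\big)$ if $|h_{n,n,a_n}|\ge|h_{n,n,(K-M+1)}|$, and $0$ otherwise. $\mathcal P_e$ is its set of pure Nash equilibria (profiles where no user can strictly improve his utility unilaterally). A shared RE is one chosen by more than one user; a sharing user is a user whose chosen RE is shared. *)

theory Defs
  imports "HOL-Probability.Probability"
begin

text \<open>Users and resource elements (REs) are indexed by 1..N (K = N).
  A channel realisation is h :: nat => nat => nat => complex, h n1 n2 k = h_{n1,n2,k}.\<close>

definition interf :: "nat \<Rightarrow> (nat \<Rightarrow> real) \<Rightarrow> (nat \<Rightarrow> nat \<Rightarrow> nat \<Rightarrow> complex)
    \<Rightarrow> (nat \<Rightarrow> nat) \<Rightarrow> nat \<Rightarrow> nat \<Rightarrow> real" where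
  "interf N P h a n k =
     (\<Sum>m' \<in> {m'\<in>{1..N}. m' \<noteq> n \<and> a m' = k}. (cmod (h m' n k))\<^sup>2 * P m')"

definition ordstat :: "nat \<Rightarrow> (nat \<Rightarrow> nat \<Rightarrow> nat \<Rightarrow> complex) \<Rightarrow> nat \<Rightarrow> nat \<Rightarrow> real" where
  "ordstat K h n j = sort (map (\<lambda>k. cmod (h n n k)) [1..<K+1]) ! (j - 1)"

definition utility :: "nat \<Rightarrow> nat \<Rightarrow> (nat \<Rightarrow> real) \<Rightarrow> real
    \<Rightarrow> (nat \<Rightarrow> nat \<Rightarrow> nat \<Rightarrow> complex) \<Rightarrow> (nat \<Rightarrow> nat) \<Rightarrow> nat \<Rightarrow> real" where
  "utility N M P N0 h a n =
     (let t = ordstat N h n (N - M + 1) in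
      if cmod (h n n (a n)) \<ge> t
      then log 2 (1 + P n * t\<^sup>2 / (N0 + interf N P h a n (a n)))
      else 0)"

definition profiles :: "nat \<Rightarrow> (nat \<Rightarrow> nat) set" where
  "profiles N = PiE {1..N} (\<lambda>_. {1..N})"

definition PNE :: "nat \<Rightarrow> nat \<Rightarrow> (nat \<Rightarrow> real) \<Rightarrow> real
    \<Rightarrow> (nat \<Rightarrow> nat \<Rightarrow> nat \<Rightarrow> complex) \<Rightarrow> (nat \<Rightarrow> nat) set" where
  "PNE N M P N0 h =
     {a \<in> profiles N. \<forall>n\<in>{1..N}. \<forall>k\<in>{1..N}.
        utility N M P N0 h (a(n := k)) n \<le> utility N M P N0 h a n}"

definition num_sharing :: "nat \<Rightarrow> (nat \<Rightarrow> nat) \<Rightarrow> nat" where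
  "num_sharing N a = card {n\<in>{1..N}. \<exists>n'\<in>{1..N}. n' \<noteq> n \<and> a n' = a n}"

definition max_share_frac :: "nat \<Rightarrow> nat \<Rightarrow> (nat \<Rightarrow> real) \<Rightarrow> real
    \<Rightarrow> (nat \<Rightarrow> nat \<Rightarrow> nat \<Rightarrow> complex) \<Rightarrow> real" where
  "max_share_frac N M P N0 h =
     (if PNE N M P N0 h = {} then 0
      else Max ((\<lambda>a. real (num_sharing N a) / real N) ` PNE N M P N0 h))"

text \<open>m-dependent frequency-selective channel with N users and K = N REs on the
  probability space \<Omega>; X n1 n2 k \<omega> = h_{n1,n2,k}(\<omega>).\<close>
definition m_dep_channel :: "'a measure \<Rightarrow> nat \<Rightarrow> nat
    \<Rightarrow> (nat \<Rightarrow> nat \<Rightarrow> nat \<Rightarrow> 'a \<Rightarrow> complex) \<Rightarrow> bool" where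
  "m_dep_channel \<Omega> N m X \<longleftrightarrow>
     (\<forall>n1\<in>{1..N}. \<forall>n2\<in>{1..N}. \<forall>k\<in>{1..N}.
        X n1 n2 k \<in> borel_measurable \<Omega>) \<and>
     (\<forall>n1\<in>{1..N}. \<forall>n2\<in>{1..N}. \<forall>k\<in>{1..N}.
        distr \<Omega> borel (X n1 n2 k) = distr \<Omega> borel (X n1 n2 1) \<and>
        measure \<Omega> {\<omega>\<in>space \<Omega>. cmod (X n1 n2 k \<omega>) = 0} = 0) \<and>
     prob_space.indep_vars \<Omega> (\<lambda>_. PiM {1..N} (\<lambda>_. borel))
        (\<lambda>p \<omega>. \<lambda>k\<in>{1..N}. X (fst p) (snd p) k \<omega>) ({1..N} \<times> {1..N}) \<and>
     (\<forall>n1\<in>{1..N}. \<forall>n2\<in>{1..N}. \<forall>s.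
        prob_space.indep_var \<Omega>
          (PiM {k\<in>{1..N}. k \<le> s} (\<lambda>_. borel))
          (\<lambda>\<omega>. \<lambda>k\<in>{k\<in>{1..N}. k \<le> s}. X n1 n2 k \<omega>)
          (PiM {k\<in>{1..N}. s + m < k} (\<lambda>_. borel))
          (\<lambda>\<omega>. \<lambda>k\<in>{k\<in>{1..N}. s + m < k}. X n1 n2 k \<omega>))"

end

theory Submission
  imports Defs
begin


lemma sort_nth_le_iff:
  fixes f :: "nat \<Rightarrow> real"
  assumes "1 \<le> j" "j \<le> N"
  shows "sort (map f [1..<N+1]) ! (j-1) \<le> c \<longleftrightarrow> j \<le> card {k\<in>{1..N}. f k \<le> c}"
proof -
  define ys where "ys = sort (map f [1..<N+1])"
  have len: "length ys = N" by (simp add: ys_def)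
  have sor: "sorted ys" by (simp add: ys_def)
  have "card {k\<in>{1..N}. f k \<le> c} = length (filter (\<lambda>k. f k \<le> c) [1..<N+1])"
    by (subst distinct_length_filter) (auto intro: arg_cong[where f=card])
  also have "\<dots> = length (filter (\<lambda>x. x \<le> c) (map f [1..<N+1]))"
    by (simp add: filter_map comp_def)
  also have "\<dots> = length (filter (\<lambda>x. x \<le> c) ys)"
    unfolding ys_def by (metis mset_filter mset_sort size_mset)
  also have "\<dots> = card {i. i < N \<and> ys ! i \<le> c}"
    by (simp add: length_filter_conv_card len)
  finally have C: "card {k\<in>{1..N}. f k \<le> c} = card {i. i < N \<and> ys ! i \<le> c}" .
  show ?thesis unfolding ys_def[symmetric] C
  proof
    assume h: "ys ! (j-1) \<le> c"
    have "{0..<j} \<subseteq> {i. i < N \<and> ys ! i \<le> c}"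
    proof
      fix i assume "i \<in> {0..<j}"
      then have "i \<le> j - 1" "i < N" using assms by auto
      then have "ys ! i \<le> ys ! (j-1)" using sor len assms
        by (intro sorted_nth_mono) auto
      then show "i \<in> {i. i < N \<and> ys ! i \<le> c}" using h \<open>i < N\<close> by auto
    qed
    from card_mono[OF _ this] show "j \<le> card {i. i < N \<and> ys ! i \<le> c}" by simp
  next
    assume h: "j \<le> card {i. i < N \<and> ys ! i \<le> c}"
    show "ys ! (j-1) \<le> c"
    proof (rule ccontr)
      assume "\<not> ys ! (j-1) \<le> c"
      have "{i. i < N \<and> ys ! i \<le> c} \<subseteq> {0..<j-1}"
      proof
        fix i assume i: "i \<in> {i. i < N \<and> ys ! i \<le> c}"
        show "i \<in> {0..<j-1}"
        proof (rule ccontr)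
          assume "i \<notin> {0..<j-1}"
          then have "j - 1 \<le> i" by auto
          then have "ys ! (j-1) \<le> ys ! i" using sor len i by (intro sorted_nth_mono) auto
          then show False using i \<open>\<not> ys ! (j-1) \<le> c\<close> by auto
        qed
      qed
      from card_mono[OF _ this] h assms show False by simp
    qed
  qed
qed



lemma ordstat_le_iff:
  assumes "1 \<le> M" "M \<le> N"
  shows "ordstat N h n (N - M + 1) \<le> c \<longleftrightarrow> N - M + 1 \<le> card {k\<in>{1..N}. cmod (h n n k) \<le> c}"
  unfolding ordstat_def using sort_nth_le_iff[of "N - M + 1" N "\<lambda>k. cmod (h n n k)" c] assms by simp

lemma ordstat_pos:
  assumes "1 \<le> M" "M \<le> N" "\<forall>k\<in>{1..N}. h n n k \<noteq> 0"
  shows "ordstat N h n (N - M + 1) > 0"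
proof -
  have "{k\<in>{1..N}. cmod (h n n k) \<le> 0} = {}" using assms(3) by auto
  then have E: "card {k\<in>{1..N}. cmod (h n n k) \<le> 0} = 0" by simp
  have "\<not> ordstat N h n (N - M + 1) \<le> 0" unfolding ordstat_le_iff[OF assms(1,2)] E by simp
  then show ?thesis by simp
qed

lemma pne_sharing:
  assumes a: "a \<in> PNE N M P N0 h" and M: "1 \<le> M" "M \<le> N"
    and Ppos: "\<And>n. P n > 0" and N0: "N0 > 0"
    and nz: "\<forall>n1\<in>{1..N}. \<forall>n2\<in>{1..N}. \<forall>k\<in>{1..N}. h n1 n2 k \<noteq> 0"
    and n: "n \<in> {1..N}" "n' \<in> {1..N}" "n' \<noteq> n" "a n' = a n"
    and k: "k \<in> {1..N}" "ordstat N h n (N - M + 1) \<le> cmod (h n n k)"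
  shows "\<exists>n''\<in>{1..N}. n'' \<noteq> n \<and> a n'' = k"
proof (rule ccontr)
  assume nex: "\<not> ?thesis"
  define t where "t = ordstat N h n (N - M + 1)"
  have tpos: "t > 0" unfolding t_def using ordstat_pos[OF M] nz n by auto
  have an: "a n \<in> {1..N}" using a n unfolding PNE_def profiles_def by auto
  have I0: "interf N P h (a(n := k)) n k = 0"
    unfolding interf_def using nex by (intro sum.neutral) auto
  have U': "utility N M P N0 h (a(n := k)) n = log 2 (1 + P n * t\<^sup>2 / N0)"
    unfolding utility_def Let_def t_def[symmetric] using k I0 t_def by simp
  define I where "I = interf N P h a n (a n)"
  have "(cmod (h n' n (a n)))\<^sup>2 * P n' \<le> I"
    unfolding I_def interf_def
    using n
    by (intro member_le_sum) (auto intro: mult_nonneg_nonneg less_imp_le[OF Ppos])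
  moreover have "(cmod (h n' n (a n)))\<^sup>2 * P n' > 0"
    using nz n an Ppos by auto
  ultimately have Ipos: "I > 0" by linarith
  have pt: "P n * t\<^sup>2 > 0" using Ppos tpos by auto
  have lt: "utility N M P N0 h a n < log 2 (1 + P n * t\<^sup>2 / N0)"
  proof (cases "cmod (h n n (a n)) \<ge> t")
    case True
    then have "utility N M P N0 h a n = log 2 (1 + P n * t\<^sup>2 / (N0 + I))"
      unfolding utility_def Let_def t_def[symmetric] I_def by simp
    also have "\<dots> < log 2 (1 + P n * t\<^sup>2 / N0)"
    proof (subst log_less_cancel_iff)
      show "1 + P n * t\<^sup>2 / (N0 + I) < 1 + P n * t\<^sup>2 / N0"
        using pt N0 Ipos by (simp add: divide_strict_left_mono)
    qed (use pt N0 Ipos in \<open>auto intro: add_pos_nonneg\<close>)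
    finally show ?thesis .
  next
    case False
    then have "utility N M P N0 h a n = 0"
      unfolding utility_def Let_def t_def[symmetric] by simp
    moreover have "0 < log 2 (1 + P n * t\<^sup>2 / N0)"
    proof -
      have "P n * t\<^sup>2 / N0 > 0" using pt N0 by (rule divide_pos_pos)
      then show ?thesis by (subst zero_less_log_cancel_iff) auto
    qed
    ultimately show ?thesis by simp
  qed
  moreover have "utility N M P N0 h (a(n := k)) n \<le> utility N M P N0 h a n"
    using a n k unfolding PNE_def by auto
  ultimately show False using U' by simp
qed



lemma sharing_count:
  fixes a :: "nat \<Rightarrow> nat"
  assumes "a ` {1..N} \<subseteq> {1..N}"
  defines "S \<equiv> {n\<in>{1..N}. \<exists>n'\<in>{1..N}. n' \<noteq> n \<and> a n' = a n}"
  shows "card S \<le> 2 * card ({1..N} - a ` {1..N})"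
proof -
  define U where "U = {1..N::nat}"
  have SU: "S \<subseteq> U" unfolding S_def U_def by auto
  have fS: "finite S" using SU U_def finite_subset by auto
  have fib: "S = (\<Union>v\<in>a ` S. {s\<in>S. a s = v})" by auto
  have "card S = (\<Sum>v\<in>a ` S. card {s\<in>S. a s = v})"
    by (subst fib, subst card_UN_disjoint) (use fS in auto)
  moreover have "\<forall>v\<in>a ` S. 2 \<le> card {s\<in>S. a s = v}"
  proof
    fix v assume "v \<in> a ` S"
    then obtain s where s: "s \<in> S" "a s = v" by auto
    then obtain s' where s': "s' \<in> {1..N}" "s' \<noteq> s" "a s' = a s" unfolding S_def by auto
    have "s' \<in> S" unfolding S_def using s' s SU U_def by auto
    then have "{s, s'} \<subseteq> {s\<in>S. a s = v}" using s s' by auto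
    from card_mono[OF _ this] show "2 \<le> card {s\<in>S. a s = v}" using s' fS by auto
  qed
  then have "(\<Sum>v\<in>a ` S. (2::nat)) \<le> (\<Sum>v\<in>a ` S. card {s\<in>S. a s = v})"
    by (intro sum_mono) auto
  ultimately have A: "2 * card (a ` S) \<le> card S" by (simp add: mult.commute)
  have "a ` U = a ` (U - S) \<union> a ` S" using SU by auto
  then have "card (a ` U) \<le> card (a ` (U - S)) + card (a ` S)"
    by (metis card_Un_le)
  also have "card (a ` (U - S)) \<le> card (U - S)" by (rule card_image_le) (simp add: U_def)
  also have "card (U - S) = N - card S" using SU fS by (simp add: card_Diff_subset U_def)
  finally have B: "card (a ` U) \<le> N - card S + card (a ` S)" by simp
  have "card S \<le> N" using card_mono[OF _ SU] U_def by simp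
  have "card ({1..N} - a ` {1..N}) = N - card (a ` U)"
    using assms(1) unfolding U_def by (simp add: card_Diff_subset)
  then show ?thesis using A B \<open>card S \<le> N\<close> unfolding U_def by linarith
qed



lemma finite_PNE: "finite (PNE N M P N0 h)"
proof -
  have "PNE N M P N0 h \<subseteq> profiles N" unfolding PNE_def by auto
  moreover have "finite (profiles N)" unfolding profiles_def by (intro finite_PiE) auto
  ultimately show ?thesis by (rule finite_subset)
qed

lemma msf_nonneg: "max_share_frac N M P N0 h \<ge> 0"
proof (cases "PNE N M P N0 h = {}")
  case False
  then obtain a where "a \<in> PNE N M P N0 h" by auto
  then have "real (num_sharing N a) / real N \<le> max_share_frac N M P N0 h"
    unfolding max_share_frac_def using False finite_PNE by (auto intro!: Max_ge)
  moreover have "real (num_sharing N a) / real N \<ge> 0" by simp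
  ultimately show ?thesis by linarith
qed (simp add: max_share_frac_def)

lemma msf_gt_iff:
  assumes "\<delta> \<ge> 0"
  shows "max_share_frac N M P N0 h > \<delta> \<longleftrightarrow>
    (\<exists>a\<in>PNE N M P N0 h. real (num_sharing N a) / real N > \<delta>)"
proof (cases "PNE N M P N0 h = {}")
  case True then show ?thesis using assms by (simp add: max_share_frac_def)
next
  case False
  then show ?thesis unfolding max_share_frac_def using finite_PNE
    by (simp add: Max_gr_iff)
qed

lemma msf_bad:
  assumes M: "1 \<le> M" "M \<le> N" and Ppos: "\<And>n. P n > 0" and N0: "N0 > 0"
    and nz: "\<forall>n1\<in>{1..N}. \<forall>n2\<in>{1..N}. \<forall>k\<in>{1..N}. h n1 n2 k \<noteq> 0"
    and d: "\<delta> \<ge> 0" and gt: "max_share_frac N M P N0 h > \<delta>"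
  shows "\<exists>S E. S \<subseteq> {1..N} \<and> E \<subseteq> {1..N} \<and> real (card S) > \<delta> * real N \<and> card S \<le> 2 * card E \<and>
     (\<forall>n\<in>S. \<forall>k\<in>E. cmod (h n n k) < ordstat N h n (N - M + 1))"
proof -
  obtain a where a: "a \<in> PNE N M P N0 h" and aS: "real (num_sharing N a) / real N > \<delta>"
    using msf_gt_iff[OF d] gt by auto
  define S where "S = {n\<in>{1..N}. \<exists>n'\<in>{1..N}. n' \<noteq> n \<and> a n' = a n}"
  define E where "E = {1..N} - a ` {1..N}"
  have prof: "a ` {1..N} \<subseteq> {1..N}" using a unfolding PNE_def profiles_def by auto
  have c1: "card S \<le> 2 * card E" unfolding S_def E_def by (rule sharing_count[OF prof])
  have Npos: "real N > 0" using M by simp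
  have c2: "real (card S) > \<delta> * real N"
    using aS Npos unfolding num_sharing_def S_def[symmetric] by (simp add: pos_less_divide_eq)
  have c3: "\<forall>n\<in>S. \<forall>k\<in>E. cmod (h n n k) < ordstat N h n (N - M + 1)"
  proof (intro ballI)
    fix n k assume n: "n \<in> S" and k: "k \<in> E"
    show "cmod (h n n k) < ordstat N h n (N - M + 1)"
    proof (rule ccontr)
      assume "\<not> ?thesis"
      then have le: "ordstat N h n (N - M + 1) \<le> cmod (h n n k)" by simp
      from n obtain n' where n': "n \<in> {1..N}" "n' \<in> {1..N}" "n' \<noteq> n" "a n' = a n"
        unfolding S_def by auto
      have "k \<in> {1..N}" using k E_def by auto
      from pne_sharing[OF a M Ppos N0 nz n' this le] obtain n'' where "n'' \<in> {1..N}" "a n'' = k" by auto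
      then show False using k E_def by auto
    qed
  qed
  show ?thesis
    by (rule exI[of _ S], rule exI[of _ E]) (use c1 c2 c3 in \<open>auto simp: S_def E_def\<close>)
qed



lemma card_filter_real:
  "real (card {k\<in>{1..N::nat}. Q k}) = (\<Sum>k\<in>{1..N}. if Q k then 1 else 0)"
proof -
  have "(\<Sum>k\<in>{1..N}. (if Q k then 1 else 0::real)) = (\<Sum>k\<in>{1..N}. of_bool (Q k))"
    by (intro sum.cong) auto
  also have "\<dots> = real (card ({1..N} \<inter> {k. Q k}))" by simp
  also have "{1..N} \<inter> {k. Q k} = {k\<in>{1..N}. Q k}" by auto
  finally show ?thesis by simp
qed

lemma nth_length_const: "xs ! length xs = [] ! 0"
  by (induction xs) auto

lemma sort_nth_measurable0:
  fixes g :: "nat \<Rightarrow> 'a \<Rightarrow> real"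
  assumes g: "\<And>k. k \<in> {1..N} \<Longrightarrow> g k \<in> borel_measurable M" and j: "1 \<le> j" "j \<le> N"
  shows "(\<lambda>x. sort (map (\<lambda>k. g k x) [1..<N+1]) ! (j-1)) \<in> borel_measurable M"
proof (subst borel_measurable_iff_le, intro allI)
  fix c
  have "{x \<in> space M. sort (map (\<lambda>k. g k x) [1..<N+1]) ! (j-1) \<le> c}
      = {x \<in> space M. real j \<le> (\<Sum>k\<in>{1..N}. if g k x \<le> c then 1 else 0)}"
  proof -
    have eq: "\<And>x. (sort (map (\<lambda>k. g k x) [1..<N+1]) ! (j-1) \<le> c) \<longleftrightarrow>
        real j \<le> (\<Sum>k\<in>{1..N}. if g k x \<le> c then 1 else 0)"
      by (subst sort_nth_le_iff[OF j], subst card_filter_real[symmetric]) simp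
    show ?thesis by (simp only: eq)
  qed
  also have "\<dots> \<in> sets M"
  proof -
    have "(\<lambda>x. \<Sum>k\<in>{1..N}. if g k x \<le> c then 1 else (0::real)) \<in> borel_measurable M"
    proof (rule borel_measurable_sum)
      fix k assume k: "k \<in> {1..N}"
      note [measurable] = g[OF k]
      show "(\<lambda>x. if g k x \<le> c then 1 else (0::real)) \<in> borel_measurable M" by measurable
    qed
    then show ?thesis by measurable
  qed
  finally show "{x \<in> space M. sort (map (\<lambda>k. g k x) [1..<N+1]) ! (j-1) \<le> c} \<in> sets M" .
qed

lemma sort_nth_measurable:
  fixes g :: "nat \<Rightarrow> 'a \<Rightarrow> real"
  assumes g: "\<And>k. k \<in> {1..N} \<Longrightarrow> g k \<in> borel_measurable M" and j: "1 \<le> j" "j \<le> N + 1"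
  shows "(\<lambda>x. sort (map (\<lambda>k. g k x) [1..<N+1]) ! (j-1)) \<in> borel_measurable M"
proof (cases "j = N + 1")
  case True
  have "\<And>x. sort (map (\<lambda>k. g k x) [1..<N+1]) ! (j-1) = ([] :: real list) ! 0"
  proof -
    fix x
    have "length (sort (map (\<lambda>k. g k x) [1..<N+1])) = j - 1" using True by simp
    then show "sort (map (\<lambda>k. g k x) [1..<N+1]) ! (j-1) = ([] :: real list) ! 0"
      by (metis nth_length_const)
  qed
  then show ?thesis by simp
next
  case False
  then show ?thesis using sort_nth_measurable0[OF g] j by simp
qed

lemma ordstat_measurable:
  fixes Xs :: "nat \<Rightarrow> nat \<Rightarrow> nat \<Rightarrow> 'a \<Rightarrow> complex"
  assumes X: "\<And>k. k \<in> {1..N} \<Longrightarrow> Xs n n k \<in> borel_measurable M" and j: "1 \<le> j" "j \<le> N + 1"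
  shows "(\<lambda>x. ordstat N (\<lambda>n1 n2 k. Xs n1 n2 k x) n j) \<in> borel_measurable M"
  unfolding ordstat_def
  by (rule sort_nth_measurable[OF _ j]) (use X in measurable)

lemma interf_measurable:
  fixes Xs :: "nat \<Rightarrow> nat \<Rightarrow> nat \<Rightarrow> 'a \<Rightarrow> complex"
  assumes X: "\<And>n1 n2 k. n1 \<in> {1..N} \<Longrightarrow> n2 \<in> {1..N} \<Longrightarrow> k \<in> {1..N} \<Longrightarrow> Xs n1 n2 k \<in> borel_measurable M"
    and n: "n \<in> {1..N}" and k: "k \<in> {1..N}"
  shows "(\<lambda>x. interf N P (\<lambda>n1 n2 k. Xs n1 n2 k x) b n k) \<in> borel_measurable M"
  unfolding interf_def
proof (rule borel_measurable_sum)
  fix m' assume "m' \<in> {m' \<in> {1..N}. m' \<noteq> n \<and> b m' = k}"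
  then have "m' \<in> {1..N}" by auto
  note [measurable] = X[OF this n k]
  show "(\<lambda>x. (cmod (Xs m' n k x))\<^sup>2 * P m') \<in> borel_measurable M" by measurable
qed

lemma utility_measurable:
  fixes Xs :: "nat \<Rightarrow> nat \<Rightarrow> nat \<Rightarrow> 'a \<Rightarrow> complex"
  assumes X: "\<And>n1 n2 k. n1 \<in> {1..N} \<Longrightarrow> n2 \<in> {1..N} \<Longrightarrow> k \<in> {1..N} \<Longrightarrow> Xs n1 n2 k \<in> borel_measurable M"
    and n: "n \<in> {1..N}" and bn: "b n \<in> {1..N}"
  shows "(\<lambda>x. utility N Mc P N0 (\<lambda>n1 n2 k. Xs n1 n2 k x) b n) \<in> borel_measurable M"
proof -
  have j: "1 \<le> N - Mc + 1" "N - Mc + 1 \<le> N + 1" by auto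
  note [measurable] = ordstat_measurable[where Xs=Xs and n=n and M=M and N=N, OF X[OF n n] j]
    interf_measurable[where P=P and b=b, OF X n bn] X[OF n n bn]
  show ?thesis unfolding utility_def Let_def by measurable
qed

lemma msf_event_measurable:
  fixes Xs :: "nat \<Rightarrow> nat \<Rightarrow> nat \<Rightarrow> 'a \<Rightarrow> complex"
  assumes X: "\<And>n1 n2 k. n1 \<in> {1..N} \<Longrightarrow> n2 \<in> {1..N} \<Longrightarrow> k \<in> {1..N} \<Longrightarrow> Xs n1 n2 k \<in> borel_measurable M"
  shows "{x\<in>space M. max_share_frac N Mc P N0 (\<lambda>n1 n2 k. Xs n1 n2 k x) > \<delta>} \<in> sets M"
proof (cases "\<delta> < 0")
  case True
  then have "{x\<in>space M. max_share_frac N Mc P N0 (\<lambda>n1 n2 k. Xs n1 n2 k x) > \<delta>} = space M"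
    using msf_nonneg[of N Mc P N0] True by (auto intro: less_le_trans)
  then show ?thesis by simp
next
  case False
  define A where "A = {a\<in>profiles N. real (num_sharing N a) / real N > \<delta>}"
  have fA: "finite A" unfolding A_def profiles_def by (rule finite_subset[of _ "PiE {1..N} (\<lambda>_. {1..N})"]) (auto intro: finite_PiE)
  have eq: "{x\<in>space M. max_share_frac N Mc P N0 (\<lambda>n1 n2 k. Xs n1 n2 k x) > \<delta>}
     = (\<Union>a\<in>A. {x\<in>space M. \<forall>n\<in>{1..N}. \<forall>k\<in>{1..N}.
          utility N Mc P N0 (\<lambda>n1 n2 k. Xs n1 n2 k x) (a(n := k)) n
            \<le> utility N Mc P N0 (\<lambda>n1 n2 k. Xs n1 n2 k x) a n})"
    using False unfolding msf_gt_iff[OF not_less[THEN iffD1, OF False]] A_def PNE_def by auto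
  show ?thesis unfolding eq
  proof (rule sets.finite_UN[OF fA])
    fix a assume "a \<in> A"
    then have a: "\<And>n. n \<in> {1..N} \<Longrightarrow> a n \<in> {1..N}" unfolding A_def profiles_def by auto
    show "{x\<in>space M. \<forall>n\<in>{1..N}. \<forall>k\<in>{1..N}.
          utility N Mc P N0 (\<lambda>n1 n2 k. Xs n1 n2 k x) (a(n := k)) n
            \<le> utility N Mc P N0 (\<lambda>n1 n2 k. Xs n1 n2 k x) a n} \<in> sets M"
    proof (rule sets.sets_Collect_finite_All[OF _ finite_atLeastAtMost])
      fix n assume n: "n \<in> {1..N}"
      show "{x\<in>space M. \<forall>k\<in>{1..N}.
          utility N Mc P N0 (\<lambda>n1 n2 k. Xs n1 n2 k x) (a(n := k)) n
            \<le> utility N Mc P N0 (\<lambda>n1 n2 k. Xs n1 n2 k x) a n} \<in> sets M"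
      proof (rule sets.sets_Collect_finite_All[OF _ finite_atLeastAtMost])
        fix k assume k: "k \<in> {1..N}"
        have [measurable]: "(\<lambda>x. utility N Mc P N0 (\<lambda>n1 n2 k. Xs n1 n2 k x) (a(n := k)) n) \<in> borel_measurable M"
          by (rule utility_measurable) (use X n k a in auto)
        have [measurable]: "(\<lambda>x. utility N Mc P N0 (\<lambda>n1 n2 k. Xs n1 n2 k x) a n) \<in> borel_measurable M"
          by (rule utility_measurable) (use X n k a in auto)
        show "{x\<in>space M. utility N Mc P N0 (\<lambda>n1 n2 k. Xs n1 n2 k x) (a(n := k)) n
            \<le> utility N Mc P N0 (\<lambda>n1 n2 k. Xs n1 n2 k x) a n} \<in> sets M" by measurable
      qed
    qed
  qed
qed



lemma card_near_le:
  fixes K :: "nat set"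
  shows "card {k\<in>K. k \<le> j + m \<and> j \<le> k + m} \<le> 2 * m + 1"
proof -
  have "{k\<in>K. k \<le> j + m \<and> j \<le> k + m} \<subseteq> {j - m..j + m}" by auto
  then have "card {k\<in>K. k \<le> j + m \<and> j \<le> k + m} \<le> card {j - m..j + m}"
    by (intro card_mono) auto
  also have "\<dots> \<le> 2 * m + 1" by simp
  finally show ?thesis .
qed

lemma (in prob_space) second_moment:
  fixes A :: "nat \<Rightarrow> 'a set" and \<rho> :: real
  assumes K: "finite K" and ev: "\<And>k. k \<in> K \<Longrightarrow> A k \<in> events"
   and pr: "\<And>k. k \<in> K \<Longrightarrow> prob (A k) = \<rho>"
   and ind: "\<And>j k. j \<in> K \<Longrightarrow> k \<in> K \<Longrightarrow> j + m < k \<Longrightarrow> prob (A j \<inter> A k) = \<rho> * \<rho>"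
  shows "expectation (\<lambda>x. ((\<Sum>k\<in>K. indicator (A k) x) - real (card K) * \<rho>)\<^sup>2)
           \<le> real (2*m+1) * real (card K) * \<rho>"
proof -
  define \<mu> where "\<mu> = real (card K) * \<rho>"
  have intI: "\<And>k. k \<in> K \<Longrightarrow> integrable M (indicator (A k) :: 'a \<Rightarrow> real)"
    using ev by (intro integrable_real_indicator) (auto simp: less_top[symmetric])
  have intII: "\<And>j k. j \<in> K \<Longrightarrow> k \<in> K \<Longrightarrow> integrable M (indicator (A j \<inter> A k) :: 'a \<Rightarrow> real)"
    using ev by (intro integrable_real_indicator) (auto simp: less_top[symmetric])
  have pw: "\<And>x. ((\<Sum>k\<in>K. indicator (A k) x) - \<mu>)\<^sup>2
     = (\<Sum>j\<in>K. \<Sum>k\<in>K. indicator (A j \<inter> A k) x) - 2 * \<mu> * (\<Sum>k\<in>K. indicator (A k) x) + \<mu>\<^sup>2"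
  proof -
    fix x
    have "(\<Sum>k\<in>K. indicator (A k) x :: real)\<^sup>2 = (\<Sum>j\<in>K. \<Sum>k\<in>K. indicator (A j) x * indicator (A k) x)"
      by (simp add: power2_eq_square sum_product)
    also have "\<dots> = (\<Sum>j\<in>K. \<Sum>k\<in>K. indicator (A j \<inter> A k) x)"
      by (simp add: indicator_inter_arith)
    finally show "((\<Sum>k\<in>K. indicator (A k) x) - \<mu>)\<^sup>2
     = (\<Sum>j\<in>K. \<Sum>k\<in>K. indicator (A j \<inter> A k) x) - 2 * \<mu> * (\<Sum>k\<in>K. indicator (A k) x) + \<mu>\<^sup>2"
      by (simp add: power2_diff)
  qed
  have "expectation (\<lambda>x. ((\<Sum>k\<in>K. indicator (A k) x) - \<mu>)\<^sup>2)
      = expectation (\<lambda>x. (\<Sum>j\<in>K. \<Sum>k\<in>K. indicator (A j \<inter> A k) x) - 2 * \<mu> * (\<Sum>k\<in>K. indicator (A k) x) + \<mu>\<^sup>2)"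
    by (simp only: pw)
  also have "\<dots> = (\<Sum>j\<in>K. \<Sum>k\<in>K. prob (A j \<inter> A k)) - 2 * \<mu> * (\<Sum>k\<in>K. prob (A k)) + \<mu>\<^sup>2"
  proof -
    have i1: "integrable M (\<lambda>x. \<Sum>j\<in>K. \<Sum>k\<in>K. indicator (A j \<inter> A k) x :: real)"
      using intII by (intro Bochner_Integration.integrable_sum) auto
    have i2: "integrable M (\<lambda>x. 2 * \<mu> * (\<Sum>k\<in>K. indicator (A k) x :: real))"
      using intI by (intro Bochner_Integration.integrable_mult_right Bochner_Integration.integrable_sum) auto
    have e1: "expectation (\<lambda>x. \<Sum>j\<in>K. \<Sum>k\<in>K. indicator (A j \<inter> A k) x :: real)
        = (\<Sum>j\<in>K. \<Sum>k\<in>K. prob (A j \<inter> A k))"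
      using intII ev
      by (simp add: Bochner_Integration.integral_sum Bochner_Integration.integrable_sum Int_absorb2 sets.sets_into_space
          sets.Int)
    have e2: "expectation (\<lambda>x. 2 * \<mu> * (\<Sum>k\<in>K. indicator (A k) x :: real))
        = 2 * \<mu> * (\<Sum>k\<in>K. prob (A k))"
      using intI ev by (simp add: Bochner_Integration.integral_sum Int_absorb2 sets.sets_into_space)
    show ?thesis
      using i1 i2 e1 e2 by (simp add: prob_space)
  qed
  also have "(\<Sum>k\<in>K. prob (A k)) = \<mu>" using pr by (simp add: \<mu>_def)
  also have "(\<Sum>j\<in>K. \<Sum>k\<in>K. prob (A j \<inter> A k)) \<le> (\<Sum>j\<in>K. real (card K) * (\<rho> * \<rho>) + \<rho> * real (2 * m + 1))"
  proof (rule sum_mono)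
    fix j assume j: "j \<in> K"
    have \<rho>0: "\<rho> \<ge> 0" using pr[OF j] by auto
    have "(\<Sum>k\<in>K. prob (A j \<inter> A k)) \<le> (\<Sum>k\<in>K. \<rho> * \<rho> + (if k \<le> j + m \<and> j \<le> k + m then \<rho> else 0))"
    proof (rule sum_mono)
      fix k assume k: "k \<in> K"
      show "prob (A j \<inter> A k) \<le> \<rho> * \<rho> + (if k \<le> j + m \<and> j \<le> k + m then \<rho> else 0)"
      proof (cases "k \<le> j + m \<and> j \<le> k + m")
        case True
        have "prob (A j \<inter> A k) \<le> prob (A j)" using ev j k by (intro finite_measure_mono) auto
        moreover have "0 \<le> \<rho> * \<rho>" using \<rho>0 by simp
        ultimately have "prob (A j \<inter> A k) \<le> \<rho> * \<rho> + \<rho>" using pr[OF j] by linarith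
        then show ?thesis using True by simp
      next
        case False
        then have "j + m < k \<or> k + m < j" by auto
        then have "prob (A j \<inter> A k) = \<rho> * \<rho>"
          using ind[OF j k] ind[OF k j] by (auto simp: Int_commute)
        then show ?thesis using False by (simp only: if_False)
      qed
    qed
    also have "\<dots> = real (card K) * (\<rho> * \<rho>) + \<rho> * real (card {k\<in>K. k \<le> j + m \<and> j \<le> k + m})"
      using K by (simp add: sum.distrib sum.If_cases Int_def conj_commute)
    also have "\<dots> \<le> real (card K) * (\<rho> * \<rho>) + \<rho> * real (2 * m + 1)"
      using card_near_le[of K j m] \<rho>0 by (intro add_left_mono mult_left_mono) auto
    finally show "(\<Sum>k\<in>K. prob (A j \<inter> A k)) \<le> real (card K) * (\<rho> * \<rho>) + \<rho> * real (2 * m + 1)" .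
  qed
  finally show ?thesis
    unfolding \<mu>_def by (simp add: power2_eq_square algebra_simps)
qed



lemma le_abs_iff_sq: "(t::real) > 0 \<Longrightarrow> t \<le> \<bar>a\<bar> \<longleftrightarrow> t\<^sup>2 \<le> a\<^sup>2"
  using abs_le_square_iff[of t a] by simp

lemma (in prob_space) chebyshev_count:
  fixes A :: "nat \<Rightarrow> 'a set" and \<rho> :: real
  assumes K: "finite K" and ev: "\<And>k. k \<in> K \<Longrightarrow> A k \<in> events"
   and pr: "\<And>k. k \<in> K \<Longrightarrow> prob (A k) = \<rho>"
   and ind: "\<And>j k. j \<in> K \<Longrightarrow> k \<in> K \<Longrightarrow> j + m < k \<Longrightarrow> prob (A j \<inter> A k) = \<rho> * \<rho>"
   and t: "t > 0"
  shows "prob {x\<in>space M. t \<le> \<bar>(\<Sum>k\<in>K. indicator (A k) x) - real (card K) * \<rho>\<bar>}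
           \<le> real (2*m+1) * real (card K) * \<rho> / t\<^sup>2"
proof -
  define u where "u x = ((\<Sum>k\<in>K. indicator (A k) x) - real (card K) * \<rho>)\<^sup>2" for x
  have meas[measurable]: "u \<in> borel_measurable M"
    unfolding u_def using ev by (intro borel_measurable_power borel_measurable_diff borel_measurable_sum) auto
  have int: "integrable M u"
  proof (rule integrable_const_bound)
    have "\<And>x. norm (u x) \<le> (real (card K) + \<bar>real (card K) * \<rho>\<bar>)\<^sup>2"
    proof -
      fix x
      have "\<bar>(\<Sum>k\<in>K. indicator (A k) x :: real)\<bar> \<le> (\<Sum>k\<in>K. 1)"
        by (rule order_trans[OF sum_abs]) (intro sum_mono, simp add: indicator_def)
      then have "\<bar>(\<Sum>k\<in>K. indicator (A k) x) - real (card K) * \<rho>\<bar> \<le> real (card K) + \<bar>real (card K) * \<rho>\<bar>"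
        by simp
      then have "\<bar>(\<Sum>k\<in>K. indicator (A k) x) - real (card K) * \<rho>\<bar> \<le> \<bar>real (card K) + \<bar>real (card K) * \<rho>\<bar>\<bar>"
        by simp
      then have "((\<Sum>k\<in>K. indicator (A k) x) - real (card K) * \<rho>)\<^sup>2 \<le> (real (card K) + \<bar>real (card K) * \<rho>\<bar>)\<^sup>2"
        by (simp only: abs_le_square_iff)
      then show "norm (u x) \<le> (real (card K) + \<bar>real (card K) * \<rho>\<bar>)\<^sup>2"
        unfolding u_def by simp
    qed
    then show "AE x in M. norm (u x) \<le> (real (card K) + \<bar>real (card K) * \<rho>\<bar>)\<^sup>2" by auto
  qed (rule meas)
  have "prob {x\<in>space M. t \<le> \<bar>(\<Sum>k\<in>K. indicator (A k) x) - real (card K) * \<rho>\<bar>}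
        = prob {x\<in>space M. u x \<ge> t\<^sup>2}"
    unfolding u_def using t by (intro arg_cong[where f=prob]) (auto simp: le_abs_iff_sq)
  also have "\<dots> \<le> expectation u / t\<^sup>2"
    by (rule integral_Markov_inequality_measure[OF int, of "{}"]) (use t in \<open>auto simp: u_def\<close>)
  also have "\<dots> \<le> real (2*m+1) * real (card K) * \<rho> / t\<^sup>2"
    unfolding u_def using second_moment[OF K ev pr ind] t by (intro divide_right_mono) auto
  finally show ?thesis .
qed

lemma (in prob_space) per_user_bound:
  fixes Y :: "nat \<Rightarrow> 'a \<Rightarrow> real" and \<rho> :: real
  assumes Y: "\<And>k. k \<in> {1..N} \<Longrightarrow> Y k \<in> borel_measurable M"
   and pr: "\<And>k. k \<in> {1..N} \<Longrightarrow> prob {x\<in>space M. Y k x > c} = \<rho>"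
   and ind: "\<And>j k. j \<in> {1..N} \<Longrightarrow> k \<in> {1..N} \<Longrightarrow> j + m < k \<Longrightarrow>
               prob ({x\<in>space M. Y j x > c} \<inter> {x\<in>space M. Y k x > c}) = \<rho> * \<rho>"
   and Mc: "1 \<le> Mc" "Mc \<le> N" and \<rho>: "\<rho> = real Mc / (2 * real N)"
   and E: "E \<subseteq> {1..N}" "E \<noteq> {}"
  shows "prob {x\<in>space M. \<forall>k\<in>E. Y k x < sort (map (\<lambda>k. Y k x) [1..<N+1]) ! (N - Mc + 1 - 1)}
    \<le> 2 * real (2*m+1) / real Mc + real (2*m+1) / (real (card E) * \<rho>)"
proof -
  define A where "A k = {x\<in>space M. Y k x > c}" for k
  have ev: "\<And>k. k \<in> {1..N} \<Longrightarrow> A k \<in> events" unfolding A_def using Y by measurable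
  have fE: "finite E" using E finite_subset by auto
  have Npos: "real N > 0" using Mc by simp
  have \<rho>pos: "\<rho> > 0" using Mc \<rho> by simp
  define S where "S K x = (\<Sum>k\<in>K. indicator (A k) x :: real)" for K x
  have Scard: "\<And>K x. finite K \<Longrightarrow> K \<subseteq> {1..N} \<Longrightarrow> x \<in> space M \<Longrightarrow> S K x = real (card {k\<in>K. Y k x > c})"
  proof -
    fix K x assume K: "finite K" "K \<subseteq> {1..N}" and x: "x \<in> space M"
    have "S K x = (\<Sum>k\<in>K. of_bool (Y k x > c))"
      unfolding S_def A_def using x by (intro sum.cong) (auto simp: indicator_def)
    also have "\<dots> = real (card (K \<inter> {k. Y k x > c}))" using K by simp
    finally show "S K x = real (card {k\<in>K. Y k x > c})" by (simp add: Int_def)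
  qed
  have Smeas: "\<And>K. K \<subseteq> {1..N} \<Longrightarrow> S K \<in> borel_measurable M"
  proof -
    fix K assume K: "K \<subseteq> {1..N}"
    show "S K \<in> borel_measurable M" unfolding S_def
      by (rule borel_measurable_sum, rule borel_measurable_indicator) (use ev K in auto)
  qed
  note [measurable] = Smeas[OF order_refl] Smeas[OF E(1)]
  have B1: "{x\<in>space M. real Mc / 2 \<le> \<bar>S {1..N} x - real (card {1..N}) * \<rho>\<bar>} \<in> events"
    by measurable
  have B2: "{x\<in>space M. real (card E) * \<rho> \<le> \<bar>S E x - real (card E) * \<rho>\<bar>} \<in> events"
    by measurable
  have sub: "{x\<in>space M. \<forall>k\<in>E. Y k x < sort (map (\<lambda>k. Y k x) [1..<N+1]) ! (N - Mc + 1 - 1)}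
     \<subseteq> {x\<in>space M. real Mc / 2 \<le> \<bar>S {1..N} x - real (card {1..N}) * \<rho>\<bar>}
       \<union> {x\<in>space M. real (card E) * \<rho> \<le> \<bar>S E x - real (card E) * \<rho>\<bar>}"
  proof
    fix x assume xA: "x \<in> {x\<in>space M. \<forall>k\<in>E. Y k x < sort (map (\<lambda>k. Y k x) [1..<N+1]) ! (N - Mc + 1 - 1)}"
    then have x: "x \<in> space M" by auto
    define t where "t = sort (map (\<lambda>k. Y k x) [1..<N+1]) ! (N - Mc + 1 - 1)"
    have j: "1 \<le> N - Mc + 1" "N - Mc + 1 \<le> N" using Mc by auto
    show "x \<in> {x\<in>space M. real Mc / 2 \<le> \<bar>S {1..N} x - real (card {1..N}) * \<rho>\<bar>}
       \<union> {x\<in>space M. real (card E) * \<rho> \<le> \<bar>S E x - real (card E) * \<rho>\<bar>}"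
    proof (cases "t \<le> c")
      case True
      have "{k\<in>E. Y k x > c} = {}" using xA True unfolding t_def by force
      then have "S E x = 0" using Scard[OF fE E(1) x] by (simp only: card.empty of_nat_0)
      then show ?thesis using x \<rho>pos by auto
    next
      case False
      have "\<not> N - Mc + 1 \<le> card {k\<in>{1..N}. Y k x \<le> c}"
        using False sort_nth_le_iff[OF j, of "\<lambda>k. Y k x" c] unfolding t_def by simp
      then have lt: "card {k\<in>{1..N}. Y k x \<le> c} \<le> N - Mc" by simp
      have "{1..N} = {k\<in>{1..N}. Y k x \<le> c} \<union> {k\<in>{1..N}. Y k x > c}" by auto
      then have "N \<le> card {k\<in>{1..N}. Y k x \<le> c} + card {k\<in>{1..N}. Y k x > c}"
        by (metis card_Un_le card_atLeastAtMost diff_Suc_1)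
      then have "Mc \<le> card {k\<in>{1..N}. Y k x > c}" using lt Mc by linarith
      then have "real Mc \<le> S {1..N} x" using Scard[of "{1..N}" x] x by simp
      moreover have "real (card {1..N}) * \<rho> = real Mc / 2" using \<rho> Npos by simp
      ultimately show ?thesis using x by auto
    qed
  qed
  have "prob {x\<in>space M. \<forall>k\<in>E. Y k x < sort (map (\<lambda>k. Y k x) [1..<N+1]) ! (N - Mc + 1 - 1)}
     \<le> prob ({x\<in>space M. real Mc / 2 \<le> \<bar>S {1..N} x - real (card {1..N}) * \<rho>\<bar>}
       \<union> {x\<in>space M. real (card E) * \<rho> \<le> \<bar>S E x - real (card E) * \<rho>\<bar>})"
    using sub B1 B2 by (intro finite_measure_mono) auto
  also have "\<dots> \<le> prob {x\<in>space M. real Mc / 2 \<le> \<bar>S {1..N} x - real (card {1..N}) * \<rho>\<bar>}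
       + prob {x\<in>space M. real (card E) * \<rho> \<le> \<bar>S E x - real (card E) * \<rho>\<bar>}"
    using B1 B2 by (intro measure_subadditive) auto
  also have "prob {x\<in>space M. real Mc / 2 \<le> \<bar>S {1..N} x - real (card {1..N}) * \<rho>\<bar>}
      \<le> real (2*m+1) * real (card {1..N}) * \<rho> / (real Mc / 2)\<^sup>2"
    unfolding S_def A_def[symmetric]
    by (rule chebyshev_count) (use ev pr ind Mc in \<open>auto simp: A_def\<close>)
  also have "\<dots> = 2 * real (2*m+1) / real Mc"
    unfolding \<rho> using Npos Mc by (simp add: power2_eq_square field_simps)
  also have "prob {x\<in>space M. real (card E) * \<rho> \<le> \<bar>S E x - real (card E) * \<rho>\<bar>}
      \<le> real (2*m+1) * real (card E) * \<rho> / (real (card E) * \<rho>)\<^sup>2"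
    unfolding S_def
  proof (rule chebyshev_count[OF fE])
    show "\<And>k. k \<in> E \<Longrightarrow> A k \<in> events" using ev E by auto
    show "\<And>k. k \<in> E \<Longrightarrow> prob (A k) = \<rho>" using pr E by (auto simp: A_def)
    show "prob (A j \<inter> A k) = \<rho> * \<rho>" if "j \<in> E" "k \<in> E" "j + m < k" for j k
    proof -
      have "j \<in> {1..N}" "k \<in> {1..N}" using that E by auto
      then show ?thesis using ind[of j k] that(3) unfolding A_def by blast
    qed
    show "0 < real (card E) * \<rho>" using E fE \<rho>pos by (simp add: card_gt_0_iff)
  qed
  also have "\<dots> = real (2*m+1) / (real (card E) * \<rho>)"
    using \<rho>pos E fE by (simp add: power2_eq_square field_simps card_gt_0_iff)
  finally show ?thesis by simp
qed



lemma (in prob_space) quantile_exists: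
  fixes Z :: "'a \<Rightarrow> real"
  assumes Z[measurable]: "Z \<in> borel_measurable M"
    and noatom: "\<And>x. prob {\<omega>\<in>space M. Z \<omega> = x} = 0"
    and \<rho>: "0 < \<rho>" "\<rho> < 1"
  shows "\<exists>c. prob {\<omega>\<in>space M. Z \<omega> > c} = \<rho>"
proof -
  define D where "D = distr M borel Z"
  interpret D: real_distribution D unfolding D_def by simp
  have cdfD: "cdf D x = prob {\<omega>\<in>space M. Z \<omega> \<le> x}" for x
    unfolding cdf_def D_def by (subst measure_distr) (auto simp: vimage_def Int_def conj_commute)
  have cont: "isCont (cdf D) x" for x
  proof -
    have "measure D {x} = prob {\<omega>\<in>space M. Z \<omega> = x}"
      unfolding D_def by (subst measure_distr) (auto simp: vimage_def Int_def conj_commute)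
    then show ?thesis using noatom D.isCont_cdf by simp
  qed
  have "eventually (\<lambda>x. cdf D x < 1 - \<rho>) at_bot"
    using order_tendstoD(2)[OF D.cdf_lim_at_bot, of "1 - \<rho>"] \<rho> by simp
  then obtain a where a: "cdf D a < 1 - \<rho>" by (auto simp: eventually_at_bot_linorder)
  have "eventually (\<lambda>x. cdf D x > 1 - \<rho>) at_top"
    using order_tendstoD(1)[OF D.cdf_lim_at_top_prob, of "1 - \<rho>"] \<rho> by simp
  then obtain b where b: "cdf D b > 1 - \<rho>" by (auto simp: eventually_at_top_linorder)
  have ab: "a \<le> b"
  proof (rule ccontr)
    assume "\<not> a \<le> b"
    then have "cdf D b \<le> cdf D a" by (intro D.cdf_nondecreasing) auto
    then show False using a b by simp
  qed
  obtain c where c: "cdf D c = 1 - \<rho>"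
    using IVT[of "cdf D" a "1 - \<rho>" b] a b ab cont by auto
  have "prob {\<omega>\<in>space M. Z \<omega> > c} = prob (space M - {\<omega>\<in>space M. Z \<omega> \<le> c})"
    by (intro arg_cong[where f=prob]) auto
  also have "\<dots> = 1 - prob {\<omega>\<in>space M. Z \<omega> \<le> c}" by (rule prob_compl) measurable
  also have "\<dots> = \<rho>" using c cdfD by simp
  finally show ?thesis by blast
qed



context
  fixes \<Omega> :: "'a measure" and N m :: nat and X :: "nat \<Rightarrow> nat \<Rightarrow> nat \<Rightarrow> 'a \<Rightarrow> complex"
  assumes ps: "prob_space \<Omega>" and chan: "m_dep_channel \<Omega> N m X"
begin

interpretation prob_space \<Omega> by (rule ps)

lemma ch_meas: "n1 \<in> {1..N} \<Longrightarrow> n2 \<in> {1..N} \<Longrightarrow> k \<in> {1..N} \<Longrightarrow> X n1 n2 k \<in> borel_measurable \<Omega>"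
  using chan unfolding m_dep_channel_def by blast

lemma ch_zero1: "n1 \<in> {1..N} \<Longrightarrow> n2 \<in> {1..N} \<Longrightarrow> k \<in> {1..N} \<Longrightarrow>
   prob {\<omega>\<in>space \<Omega>. cmod (X n1 n2 k \<omega>) = 0} = 0"
  using chan unfolding m_dep_channel_def by blast

lemma ch_zero1': "n1 \<in> {1..N} \<Longrightarrow> n2 \<in> {1..N} \<Longrightarrow> k \<in> {1..N} \<Longrightarrow>
   prob {\<omega>\<in>space \<Omega>. X n1 n2 k \<omega> = 0} = 0"
  using ch_zero1 by simp

lemma ch_ident:
  assumes n: "n \<in> {1..N}" and k: "k \<in> {1..N}"
  shows "prob {\<omega>\<in>space \<Omega>. c < cmod (X n n k \<omega>)} = prob {\<omega>\<in>space \<Omega>. c < cmod (X n n 1 \<omega>)}"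
proof -
  have eq: "distr \<Omega> borel (X n n k) = distr \<Omega> borel (X n n 1)"
    using chan n k unfolding m_dep_channel_def by blast
  have one: "1 \<in> {1..N}" using n by auto
  have B: "{z::complex. c < cmod z} \<in> sets borel" by measurable
  have "prob {\<omega>\<in>space \<Omega>. c < cmod (X n n k \<omega>)} = measure (distr \<Omega> borel (X n n k)) {z. c < cmod z}"
    using ch_meas[OF n n k] B by (subst measure_distr) (auto simp: vimage_def Int_def conj_commute)
  also have "\<dots> = measure (distr \<Omega> borel (X n n 1)) {z. c < cmod z}" by (simp only: eq)
  also have "\<dots> = prob {\<omega>\<in>space \<Omega>. c < cmod (X n n 1 \<omega>)}"
    using ch_meas[OF n n one] B by (subst measure_distr) (auto simp: vimage_def Int_def conj_commute)
  finally show ?thesis .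
qed

lemma ch_pair:
  assumes n: "n \<in> {1..N}" and j: "j \<in> {1..N}" and k: "k \<in> {1..N}" and jk: "j + m < k"
  shows "prob ({\<omega>\<in>space \<Omega>. c < cmod (X n n j \<omega>)} \<inter> {\<omega>\<in>space \<Omega>. c < cmod (X n n k \<omega>)})
     = prob {\<omega>\<in>space \<Omega>. c < cmod (X n n j \<omega>)} * prob {\<omega>\<in>space \<Omega>. c < cmod (X n n k \<omega>)}"
proof -
  define I1 where "I1 = {k\<in>{1..N}. k \<le> j}"
  define I2 where "I2 = {k'\<in>{1..N}. j + m < k'}"
  define V1 where "V1 = (\<lambda>\<omega>. \<lambda>k\<in>I1. X n n k \<omega>)"
  define V2 where "V2 = (\<lambda>\<omega>. \<lambda>k\<in>I2. X n n k \<omega>)"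
  have ind: "indep_var (PiM I1 (\<lambda>_. borel)) V1 (PiM I2 (\<lambda>_. borel)) V2"
    using chan n unfolding m_dep_channel_def I1_def I2_def V1_def V2_def by blast
  have jI: "j \<in> I1" using j unfolding I1_def by auto
  have kI: "k \<in> I2" using k jk unfolding I2_def by auto
  define B1 where "B1 = {f\<in>space (PiM I1 (\<lambda>_. borel)). c < cmod (f j)}"
  define B2 where "B2 = {f\<in>space (PiM I2 (\<lambda>_. borel)). c < cmod (f k)}"
  have B1: "B1 \<in> sets (PiM I1 (\<lambda>_. borel :: complex measure))"
    unfolding B1_def using jI by measurable
  have B2: "B2 \<in> sets (PiM I2 (\<lambda>_. borel :: complex measure))"
    unfolding B2_def using kI by measurable
  have e1: "V1 -` B1 \<inter> space \<Omega> = {\<omega>\<in>space \<Omega>. c < cmod (X n n j \<omega>)}"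
    unfolding V1_def B1_def using jI by (auto simp: space_PiM)
  have e2: "V2 -` B2 \<inter> space \<Omega> = {\<omega>\<in>space \<Omega>. c < cmod (X n n k \<omega>)}"
    unfolding V2_def B2_def using kI by (auto simp: space_PiM)
  from ind have "indep_set (sigma_sets (space \<Omega>) {V1 -` A \<inter> space \<Omega> | A. A \<in> sets (PiM I1 (\<lambda>_. borel))})
      (sigma_sets (space \<Omega>) {V2 -` A \<inter> space \<Omega> | A. A \<in> sets (PiM I2 (\<lambda>_. borel))})"
    unfolding indep_var_eq by blast
  then have "\<forall>a\<in>sigma_sets (space \<Omega>) {V1 -` A \<inter> space \<Omega> | A. A \<in> sets (PiM I1 (\<lambda>_. borel))}.
      \<forall>b\<in>sigma_sets (space \<Omega>) {V2 -` A \<inter> space \<Omega> | A. A \<in> sets (PiM I2 (\<lambda>_. borel))}.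
      prob (a \<inter> b) = prob a * prob b"
    unfolding indep_sets2_eq by blast
  moreover have "V1 -` B1 \<inter> space \<Omega> \<in> sigma_sets (space \<Omega>) {V1 -` A \<inter> space \<Omega> | A. A \<in> sets (PiM I1 (\<lambda>_. borel))}"
    using B1 by (intro sigma_sets.Basic) blast
  moreover have "V2 -` B2 \<inter> space \<Omega> \<in> sigma_sets (space \<Omega>) {V2 -` A \<inter> space \<Omega> | A. A \<in> sets (PiM I2 (\<lambda>_. borel))}"
    using B2 by (intro sigma_sets.Basic) blast
  ultimately show ?thesis unfolding e1 e2 by blast
qed

lemma ch_users:
  fixes G :: "nat \<Rightarrow> (nat \<Rightarrow> complex) set"
  assumes S: "S \<subseteq> {1..N}" "S \<noteq> {}"
    and G: "\<And>n. n \<in> S \<Longrightarrow> G n \<in> sets (PiM {1..N} (\<lambda>_. borel))"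
  shows "prob (\<Inter>n\<in>S. (\<lambda>\<omega>. \<lambda>k\<in>{1..N}. X n n k \<omega>) -` G n \<inter> space \<Omega>)
     = (\<Prod>n\<in>S. prob ((\<lambda>\<omega>. \<lambda>k\<in>{1..N}. X n n k \<omega>) -` G n \<inter> space \<Omega>))"
proof -
  define Y where "Y = (\<lambda>p \<omega>. \<lambda>k\<in>{1..N}. X (fst p) (snd p) k \<omega>)"
  have iv: "indep_vars (\<lambda>_. PiM {1..N} (\<lambda>_. borel)) Y ({1..N} \<times> {1..N})"
    using chan unfolding m_dep_channel_def Y_def by blast
  then have isets: "indep_sets (\<lambda>i. { Y i -` A \<inter> space \<Omega> | A. A \<in> sets (PiM {1..N} (\<lambda>_. borel))}) ({1..N} \<times> {1..N})"
    unfolding indep_vars_def2 by blast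
  define J where "J = (\<lambda>n. (n, n)) ` S"
  define A where "A p = Y p -` G (fst p) \<inter> space \<Omega>" for p
  have fS: "finite S" using S finite_subset by auto
  have "prob (\<Inter>p\<in>J. A p) = (\<Prod>p\<in>J. prob (A p))"
  proof (rule indep_setsD[OF isets])
    show "J \<subseteq> {1..N} \<times> {1..N}" using S unfolding J_def by auto
    show "J \<noteq> {}" using S unfolding J_def by auto
    show "finite J" using fS unfolding J_def by auto
    show "\<forall>j\<in>J. A j \<in> {Y j -` A \<inter> space \<Omega> |A. A \<in> sets (Pi\<^sub>M {1..N} (\<lambda>_. borel))}"
      unfolding J_def A_def using G by auto
  qed
  moreover have "(\<Inter>p\<in>J. A p) = (\<Inter>n\<in>S. (\<lambda>\<omega>. \<lambda>k\<in>{1..N}. X n n k \<omega>) -` G n \<inter> space \<Omega>)"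
    unfolding J_def A_def Y_def by auto
  moreover have "(\<Prod>p\<in>J. prob (A p)) = (\<Prod>n\<in>S. prob ((\<lambda>\<omega>. \<lambda>k\<in>{1..N}. X n n k \<omega>) -` G n \<inter> space \<Omega>))"
    unfolding J_def by (subst prod.reindex) (auto simp: inj_on_def A_def Y_def)
  ultimately show ?thesis by simp
qed

lemma ch_zero:
  "prob {\<omega>\<in>space \<Omega>. \<not> (\<forall>n1\<in>{1..N}. \<forall>n2\<in>{1..N}. \<forall>k\<in>{1..N}. X n1 n2 k \<omega> \<noteq> 0)} = 0"
proof -
  define T where "T = {1..N} \<times> {1..N} \<times> {1..N}"
  define Z where "Z t = {\<omega>\<in>space \<Omega>. cmod (X (fst t) (fst (snd t)) (snd (snd t)) \<omega>) = 0}" for t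
  have eq: "{\<omega>\<in>space \<Omega>. \<not> (\<forall>n1\<in>{1..N}. \<forall>n2\<in>{1..N}. \<forall>k\<in>{1..N}. X n1 n2 k \<omega> \<noteq> 0)} = (\<Union>t\<in>T. Z t)"
  proof
    show "{\<omega>\<in>space \<Omega>. \<not> (\<forall>n1\<in>{1..N}. \<forall>n2\<in>{1..N}. \<forall>k\<in>{1..N}. X n1 n2 k \<omega> \<noteq> 0)} \<subseteq> (\<Union>t\<in>T. Z t)"
    proof
      fix \<omega> assume "\<omega> \<in> {\<omega>\<in>space \<Omega>. \<not> (\<forall>n1\<in>{1..N}. \<forall>n2\<in>{1..N}. \<forall>k\<in>{1..N}. X n1 n2 k \<omega> \<noteq> 0)}"
      then obtain n1 n2 k where "\<omega> \<in> space \<Omega>" "n1 \<in> {1..N}" "n2 \<in> {1..N}" "k \<in> {1..N}" "X n1 n2 k \<omega> = 0" by blast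
      then show "\<omega> \<in> (\<Union>t\<in>T. Z t)" unfolding T_def Z_def by (intro UN_I[of "(n1, n2, k)"]) auto
    qed
    show "(\<Union>t\<in>T. Z t) \<subseteq> {\<omega>\<in>space \<Omega>. \<not> (\<forall>n1\<in>{1..N}. \<forall>n2\<in>{1..N}. \<forall>k\<in>{1..N}. X n1 n2 k \<omega> \<noteq> 0)}"
      unfolding T_def Z_def by force
  qed
  have Zs: "Z ` T \<subseteq> events"
  proof
    fix z assume "z \<in> Z ` T"
    then obtain t where t: "t \<in> T" "z = Z t" by auto
    have [measurable]: "X (fst t) (fst (snd t)) (snd (snd t)) \<in> borel_measurable \<Omega>"
      using t unfolding T_def by (intro ch_meas) auto
    show "z \<in> events" unfolding t Z_def by measurable
  qed
  have "prob (\<Union>t\<in>T. Z t) \<le> (\<Sum>t\<in>T. prob (Z t))"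
    by (rule finite_measure_subadditive_finite) (use Zs in \<open>auto simp: T_def\<close>)
  also have "\<dots> = 0"
    unfolding Z_def T_def by (intro sum.neutral) (auto intro: ch_zero1')
  finally show ?thesis unfolding eq using measure_nonneg[of \<Omega> "\<Union>t\<in>T. Z t"] by linarith
qed

end



lemma cmod_meas: "(f :: 'a \<Rightarrow> complex) \<in> borel_measurable M \<Longrightarrow> (\<lambda>x. cmod (f x)) \<in> borel_measurable M"
  by measurable

lemma per_N_bound:
  fixes \<Omega> :: "'a measure" and X :: "nat \<Rightarrow> nat \<Rightarrow> nat \<Rightarrow> 'a \<Rightarrow> complex"
  assumes ps: "prob_space \<Omega>" and chan: "m_dep_channel \<Omega> N m X"
    and cont: "\<And>n k x. n \<in> {1..N} \<Longrightarrow> k \<in> {1..N} \<Longrightarrow>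
                 measure \<Omega> {\<omega>\<in>space \<Omega>. cmod (X n n k \<omega>) = x} = 0"
    and Ppos: "\<And>n. P n > 0" and N0: "N0 > 0" and \<delta>: "\<delta> > 0"
    and Mc: "1 \<le> Mc" "Mc \<le> N"
    and p: "p = 2 * real (2*m+1) / real Mc + 4 * real (2*m+1) / (\<delta> * real Mc)" and p1: "p \<le> 1"
  shows "measure \<Omega> {\<omega>\<in>space \<Omega>. max_share_frac N Mc P N0 (\<lambda>n1 n2 k. X n1 n2 k \<omega>) > \<delta>}
          \<le> 4 ^ N * p powr (\<delta> * real N)"
proof -
  interpret prob_space \<Omega> by (rule ps)
  define U where "U = {1..N}"
  define \<rho> where "\<rho> = real Mc / (2 * real N)"
  have Npos: "real N > 0" using Mc by simp
  have dN: "\<delta> * real N > 0" using \<delta> Npos by simp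
  have \<rho>01: "0 < \<rho>" "\<rho> < 1" using Mc Npos unfolding \<rho>_def by (auto simp: field_simps)
  have ppos: "p > 0" unfolding p using Mc \<delta> by (intro add_pos_pos divide_pos_pos) auto
  have "\<forall>n\<in>U. \<exists>c. prob {\<omega>\<in>space \<Omega>. c < cmod (X n n 1 \<omega>)} = \<rho>"
  proof
    fix n assume n: "n \<in> U"
    have one: "1 \<in> {1..N}" using n U_def by auto
    show "\<exists>c. prob {\<omega>\<in>space \<Omega>. c < cmod (X n n 1 \<omega>)} = \<rho>"
    proof (rule quantile_exists[where Z="\<lambda>\<omega>. cmod (X n n 1 \<omega>)", OF _ _ \<rho>01])
      show "(\<lambda>\<omega>. cmod (X n n 1 \<omega>)) \<in> borel_measurable \<Omega>"
        using ch_meas[OF ps chan, of n n 1] n one U_def by (intro cmod_meas) auto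
      show "\<And>x. prob {\<omega> \<in> space \<Omega>. cmod (X n n 1 \<omega>) = x} = 0"
        using cont n one U_def by auto
    qed
  qed
  then obtain cc where cc: "\<And>n. n \<in> U \<Longrightarrow> prob {\<omega>\<in>space \<Omega>. cc n < cmod (X n n 1 \<omega>)} = \<rho>"
    by metis
  define B where "B n E = {\<omega>\<in>space \<Omega>. \<forall>k\<in>E. cmod (X n n k \<omega>) < ordstat N (\<lambda>n1 n2 k. X n1 n2 k \<omega>) n (N - Mc + 1)}" for n E
  define G where "G n E = {f\<in>space (PiM U (\<lambda>_. borel)). \<forall>k\<in>E.
       cmod (f k) < sort (map (\<lambda>k. cmod (f k)) [1..<N+1]) ! (N - Mc + 1 - 1)}" for n :: nat and E
  define V where "V n \<omega> = (\<lambda>k\<in>U. X n n k \<omega>)" for n \<omega>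
  have BG: "B n E = V n -` G n E \<inter> space \<Omega>" if E: "E \<subseteq> U" for n E
  proof -
    have m: "\<And>\<omega>. map (\<lambda>k. cmod (V n \<omega> k)) [1..<N+1] = map (\<lambda>k. cmod (X n n k \<omega>)) [1..<N+1]"
      unfolding V_def U_def by (intro map_cong) auto
    have vk: "\<And>\<omega> k. k \<in> E \<Longrightarrow> V n \<omega> k = X n n k \<omega>"
      using E unfolding V_def by auto
    have sp: "\<And>\<omega>. V n \<omega> \<in> space (PiM U (\<lambda>_. borel :: complex measure))"
      unfolding V_def by (auto simp: space_PiM)
    show ?thesis
    proof (rule set_eqI)
      fix \<omega>
      show "\<omega> \<in> B n E \<longleftrightarrow> \<omega> \<in> V n -` G n E \<inter> space \<Omega>"
      proof -
        have tV: "sort (map (\<lambda>k. cmod (V n \<omega> k)) [1..<N+1]) ! (N - Mc + 1 - 1)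
           = sort (map (\<lambda>k. cmod (X n n k \<omega>)) [1..<N+1]) ! (N - Mc + 1 - 1)"
          by (simp only: m)
        show ?thesis
          unfolding B_def G_def ordstat_def vimage_def mem_Collect_eq Int_iff tV
          using vk[of _ \<omega>] sp[of \<omega>] by auto
      qed
    qed
  qed
  have Gmeas: "G n E \<in> sets (PiM U (\<lambda>_. borel))" if E: "E \<subseteq> U" for n E
  proof -
    have tm: "(\<lambda>f. sort (map (\<lambda>k. cmod (f k)) [1..<N+1]) ! (N - Mc + 1 - 1)) \<in> borel_measurable (PiM U (\<lambda>_. borel :: complex measure))"
      by (rule sort_nth_measurable[where g="\<lambda>k f. cmod (f k)"]) (auto simp: U_def)
    show ?thesis unfolding G_def
    proof (rule sets.sets_Collect_finite_All)
      show "finite E" using E U_def finite_subset by auto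
      fix k assume k: "k \<in> E"
      then have "k \<in> U" using E by auto
      then have [measurable]: "(\<lambda>f. cmod (f k)) \<in> borel_measurable (PiM U (\<lambda>_. borel :: complex measure))"
        by measurable
      note [measurable] = tm
      show "{f \<in> space (Pi\<^sub>M U (\<lambda>_. borel)). cmod (f k) < sort (map (\<lambda>k. cmod (f k)) [1..<N + 1]) ! (N - Mc + 1 - 1)}
         \<in> sets (Pi\<^sub>M U (\<lambda>_. borel))" by measurable
    qed
  qed
  have Vmeas: "V n \<in> measurable \<Omega> (PiM U (\<lambda>_. borel))" if n: "n \<in> U" for n
    unfolding V_def by (rule measurable_restrict) (use ch_meas[OF ps chan] n U_def in auto)
  have Bev: "B n E \<in> events" if "n \<in> U" "E \<subseteq> U" for n E
    unfolding BG[OF that(2)] by (rule measurable_sets[OF Vmeas[OF that(1)] Gmeas[OF that(2)]])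
  have Bbound: "prob (B n E) \<le> p" if n: "n \<in> U" and E: "E \<subseteq> U" and Ec: "\<delta> * real N < 2 * real (card E)" for n E
  proof -
    have Ene: "E \<noteq> {}" using Ec dN by (cases "E = {}") auto
    have fE: "finite E" using E U_def finite_subset by auto
    have "prob (B n E) \<le> 2 * real (2*m+1) / real Mc + real (2*m+1) / (real (card E) * \<rho>)"
      unfolding B_def ordstat_def
    proof (rule per_user_bound[where Y="\<lambda>k \<omega>. cmod (X n n k \<omega>)" and c="cc n", OF _ _ _ Mc \<rho>_def])
      show "\<And>k. k \<in> {1..N} \<Longrightarrow> (\<lambda>\<omega>. cmod (X n n k \<omega>)) \<in> borel_measurable \<Omega>"
        using ch_meas[OF ps chan] n U_def by (intro cmod_meas) auto
      have nN: "n \<in> {1..N}" using n U_def by simp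
      show pk: "prob {\<omega> \<in> space \<Omega>. cc n < cmod (X n n k \<omega>)} = \<rho>" if k: "k \<in> {1..N}" for k
      proof -
        have "prob {\<omega> \<in> space \<Omega>. cc n < cmod (X n n k \<omega>)} = prob {\<omega> \<in> space \<Omega>. cc n < cmod (X n n 1 \<omega>)}"
          by (rule ch_ident[OF ps chan nN k])
        also have "\<dots> = \<rho>" by (rule cc[OF n])
        finally show ?thesis .
      qed
      show "prob ({\<omega> \<in> space \<Omega>. cc n < cmod (X n n j \<omega>)} \<inter> {\<omega> \<in> space \<Omega>. cc n < cmod (X n n k \<omega>)}) = \<rho> * \<rho>"
        if jk: "j \<in> {1..N}" "k \<in> {1..N}" "j + m < k" for j k
        using ch_pair[OF ps chan nN jk] pk[OF jk(1)] pk[OF jk(2)] by simp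
      show "E \<subseteq> {1..N}" "E \<noteq> {}" using E Ene U_def by auto
    qed
    also have "real (2*m+1) / (real (card E) * \<rho>) \<le> 4 * real (2*m+1) / (\<delta> * real Mc)"
    proof -
      have "\<delta> * real Mc / 4 \<le> real (card E) * \<rho>"
      proof -
        have "\<delta> * real Mc / 4 = (\<delta> * real N / 2) * \<rho>" unfolding \<rho>_def using Npos by (simp add: field_simps)
        also have "\<dots> \<le> real (card E) * \<rho>" using Ec \<rho>01 by (intro mult_right_mono) auto
        finally show ?thesis .
      qed
      moreover have "0 < \<delta> * real Mc / 4" using \<delta> Mc by simp
      ultimately have "real (2*m+1) / (real (card E) * \<rho>) \<le> real (2*m+1) / (\<delta> * real Mc / 4)"
        by (intro divide_left_mono) auto
      then show ?thesis by (simp add: field_simps)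
    qed
    finally show ?thesis unfolding p by simp
  qed
  define Pairs where "Pairs = {(S, E). S \<subseteq> U \<and> E \<subseteq> U \<and> \<delta> * real N < real (card S) \<and> card S \<le> 2 * card E}"
  define Z where "Z = {\<omega>\<in>space \<Omega>. \<not> (\<forall>n1\<in>{1..N}. \<forall>n2\<in>{1..N}. \<forall>k\<in>{1..N}. X n1 n2 k \<omega> \<noteq> 0)}"
  define W where "W q = (\<Inter>n\<in>fst q. B n (snd q))" for q
  have fPairs: "finite Pairs" and cPairs: "card Pairs \<le> 4 ^ N"
  proof -
    have sub: "Pairs \<subseteq> Pow U \<times> Pow U" unfolding Pairs_def by auto
    have fin: "finite (Pow U \<times> Pow U)" unfolding U_def by auto
    show "finite Pairs" using finite_subset[OF sub fin] .
    have "card Pairs \<le> card (Pow U \<times> Pow U)" by (rule card_mono[OF fin sub])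
    also have "\<dots> = 4 ^ N" unfolding U_def by (simp add: card_cartesian_product card_Pow power_mult_distrib[symmetric])
    finally show "card Pairs \<le> 4 ^ N" .
  qed
  have Sne: "fst q \<noteq> {}" if "q \<in> Pairs" for q
    using that dN unfolding Pairs_def by (cases "fst q = {}") auto
  have Wev: "W q \<in> events" if q: "q \<in> Pairs" for q
  proof -
    have a: "fst q \<subseteq> U" "snd q \<subseteq> U" using q unfolding Pairs_def by auto
    have "finite (fst q)" using a(1) unfolding U_def by (rule finite_subset) simp
    note a this
    then show ?thesis unfolding W_def using Sne[OF q] Bev by (intro sets.finite_INT) auto
  qed
  have Wbound: "prob (W q) \<le> p powr (\<delta> * real N)" if q: "q \<in> Pairs" for q
  proof -
    obtain S E where qSE: "q = (S, E)" by (cases q)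
    have S: "S \<subseteq> U" "E \<subseteq> U" "\<delta> * real N < real (card S)" "card S \<le> 2 * card E"
      using q unfolding qSE Pairs_def by auto
    have Ec: "\<delta> * real N < 2 * real (card E)" using S(3,4) by linarith
    have "prob (W q) = prob (\<Inter>n\<in>S. V n -` G n E \<inter> space \<Omega>)"
      unfolding W_def qSE using BG[OF S(2)] by simp
    also have "\<dots> = (\<Prod>n\<in>S. prob (V n -` G n E \<inter> space \<Omega>))"
      unfolding V_def U_def
      by (rule ch_users[OF ps chan]) (use S Sne[OF q] qSE Gmeas[OF S(2)] U_def in auto)
    also have "\<dots> = (\<Prod>n\<in>S. prob (B n E))" using BG[OF S(2)] by simp
    also have "\<dots> \<le> (\<Prod>n\<in>S. p)"
      by (rule prod_mono) (use Bbound S Ec in auto)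
    also have "\<dots> = p powr real (card S)" using ppos by (simp add: powr_realpow)
    also have "\<dots> \<le> p powr (\<delta> * real N)"
      using S(3) ppos p1 by (intro powr_mono') auto
    finally show ?thesis .
  qed
  have sub: "{\<omega>\<in>space \<Omega>. max_share_frac N Mc P N0 (\<lambda>n1 n2 k. X n1 n2 k \<omega>) > \<delta>} \<subseteq> Z \<union> (\<Union>q\<in>Pairs. W q)"
  proof
    fix \<omega> assume \<omega>: "\<omega> \<in> {\<omega>\<in>space \<Omega>. max_share_frac N Mc P N0 (\<lambda>n1 n2 k. X n1 n2 k \<omega>) > \<delta>}"
    show "\<omega> \<in> Z \<union> (\<Union>q\<in>Pairs. W q)"
    proof (cases "\<omega> \<in> Z")
      case False
      then have nz: "\<forall>n1\<in>{1..N}. \<forall>n2\<in>{1..N}. \<forall>k\<in>{1..N}. X n1 n2 k \<omega> \<noteq> 0" using \<omega> Z_def by auto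
      obtain S E where SE: "S \<subseteq> {1..N}" "E \<subseteq> {1..N}" "real (card S) > \<delta> * real N" "card S \<le> 2 * card E"
         "\<forall>n\<in>S. \<forall>k\<in>E. cmod (X n n k \<omega>) < ordstat N (\<lambda>n1 n2 k. X n1 n2 k \<omega>) n (N - Mc + 1)"
        using msf_bad[where P=P and \<delta>=\<delta> and h="\<lambda>n1 n2 k. X n1 n2 k \<omega>", OF Mc Ppos N0 nz] \<delta> \<omega> by auto
      have "(S, E) \<in> Pairs" using SE unfolding Pairs_def U_def by auto
      moreover have "\<omega> \<in> W (S, E)" using SE \<omega> unfolding W_def B_def by auto
      ultimately show ?thesis by blast
    qed simp
  qed
  have Zev: "Z \<in> events"
  proof -
    have "Z = space \<Omega> - {\<omega>\<in>space \<Omega>. \<forall>n1\<in>{1..N}. \<forall>n2\<in>{1..N}. \<forall>k\<in>{1..N}. X n1 n2 k \<omega> \<noteq> 0}"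
      unfolding Z_def by auto
    also have "\<dots> \<in> events"
    proof (rule sets.compl_sets)
      show "{\<omega>\<in>space \<Omega>. \<forall>n1\<in>{1..N}. \<forall>n2\<in>{1..N}. \<forall>k\<in>{1..N}. X n1 n2 k \<omega> \<noteq> 0} \<in> events"
      proof (intro sets.sets_Collect_finite_All finite_atLeastAtMost)
        fix n1 n2 k assume "n1 \<in> {1..N}" "n2 \<in> {1..N}" "k \<in> {1..N}"
        note [measurable] = ch_meas[OF ps chan this]
        show "{\<omega>\<in>space \<Omega>. X n1 n2 k \<omega> \<noteq> 0} \<in> events" by measurable
      qed
    qed
    finally show ?thesis .
  qed
  have UW: "(\<Union>q\<in>Pairs. W q) \<in> events" using Wev fPairs by (intro sets.finite_UN) auto
  have "measure \<Omega> {\<omega>\<in>space \<Omega>. max_share_frac N Mc P N0 (\<lambda>n1 n2 k. X n1 n2 k \<omega>) > \<delta>}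
        \<le> prob (Z \<union> (\<Union>q\<in>Pairs. W q))"
    by (rule finite_measure_mono[OF sub]) (use Zev UW in auto)
  also have "\<dots> \<le> prob Z + prob (\<Union>q\<in>Pairs. W q)"
    by (rule measure_subadditive) (use Zev UW in auto)
  also have "prob Z = 0" unfolding Z_def by (rule ch_zero[OF ps chan])
  also have "prob (\<Union>q\<in>Pairs. W q) \<le> (\<Sum>q\<in>Pairs. prob (W q))"
    by (rule finite_measure_subadditive_finite[OF fPairs]) (use Wev in auto)
  also have "\<dots> \<le> (\<Sum>q\<in>Pairs. p powr (\<delta> * real N))" by (rule sum_mono) (rule Wbound)
  also have "\<dots> = real (card Pairs) * p powr (\<delta> * real N)" by simp
  also have "\<dots> \<le> 4 ^ N * p powr (\<delta> * real N)"
  proof (rule mult_right_mono)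
    show "real (card Pairs) \<le> 4 ^ N" using cPairs by (metis of_nat_le_iff of_nat_numeral of_nat_power)
  qed simp
  finally show ?thesis by simp
qed



lemma pow_seq_zero:
  fixes q :: "nat \<Rightarrow> real"
  assumes q0: "q \<longlonglongrightarrow> 0" and qnn: "\<And>n. q n \<ge> 0"
  shows "(\<lambda>N. q N ^ N) \<longlonglongrightarrow> 0"
proof (rule tendsto_sandwich[where f="\<lambda>_. 0" and h="\<lambda>N. (1/2) ^ N"])
  show "eventually (\<lambda>N. 0 \<le> q N ^ N) sequentially" using qnn by simp
  have "eventually (\<lambda>N. q N < 1/2) sequentially" using order_tendstoD(2)[OF q0, of "1/2"] by simp
  then show "eventually (\<lambda>N. q N ^ N \<le> (1/2) ^ N) sequentially"
    by eventually_elim (use qnn in \<open>auto intro: power_mono less_imp_le\<close>)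
  show "(\<lambda>N. (1/2::real) ^ N) \<longlonglongrightarrow> 0" by (rule LIMSEQ_realpow_zero) auto
qed simp

theorem mainTheorem5:
  fixes \<Omega> :: "nat \<Rightarrow> 'a measure"
    and X :: "nat \<Rightarrow> nat \<Rightarrow> nat \<Rightarrow> nat \<Rightarrow> 'a \<Rightarrow> complex"
    and m :: nat and \<epsilon> :: real and Mseq :: "nat \<Rightarrow> nat"
    and P :: "nat \<Rightarrow> real" and N0 :: real
  assumes prob: "\<And>N. prob_space (\<Omega> N)"
    and chan: "\<And>N. m_dep_channel (\<Omega> N) N m (X N)"
    and cont: "\<And>N n k x. n \<in> {1..N} \<Longrightarrow> k \<in> {1..N} \<Longrightarrow>
                 measure (\<Omega> N) {\<omega>\<in>space (\<Omega> N). cmod (X N n n k \<omega>) = x} = 0"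
    and P_pos: "\<And>n. P n > 0"
    and N0_pos: "N0 > 0"
    and eps: "\<epsilon> > 0"
    and M_lower: "\<And>N. real (Mseq N) \<ge> (exp 1 + \<epsilon>) * real (m + 1) * ln (real N)"
    and M_sublin: "(\<lambda>N. real (Mseq N) / real N) \<longlonglongrightarrow> 0"
  shows "(\<forall>N \<delta>. {\<omega>\<in>space (\<Omega> N). max_share_frac N (Mseq N) P N0 (\<lambda>n1 n2 k. X N n1 n2 k \<omega>) > \<delta>}
              \<in> sets (\<Omega> N)) \<and>
         (\<forall>\<delta>>0. (\<lambda>N. measure (\<Omega> N)
            {\<omega>\<in>space (\<Omega> N). max_share_frac N (Mseq N) P N0 (\<lambda>n1 n2 k. X N n1 n2 k \<omega>) > \<delta>})
            \<longlonglongrightarrow> 0)"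
proof (intro conjI allI impI)
  fix N \<delta>
  show "{\<omega>\<in>space (\<Omega> N). max_share_frac N (Mseq N) P N0 (\<lambda>n1 n2 k. X N n1 n2 k \<omega>) > \<delta>} \<in> sets (\<Omega> N)"
    by (rule msf_event_measurable) (rule ch_meas[OF prob chan])
next
  fix \<delta> :: real assume \<delta>: "\<delta> > 0"
  define C where "C = 2 * real (2*m+1) + 4 * real (2*m+1) / \<delta>"
  define p where "p N = C / real (Mseq N)" for N
  have Cpos: "C > 0" unfolding C_def using \<delta> by (intro add_pos_pos) auto
  have lnN: "filterlim (\<lambda>N. ln (real N)) at_top sequentially"
    by (rule filterlim_compose[OF ln_at_top filterlim_real_sequentially])
  have coef: "(exp 1 + \<epsilon>) * real (m + 1) \<ge> 1"
  proof -
    have "exp (1::real) \<ge> 1" by simp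
    then have "exp 1 + \<epsilon> \<ge> 1" using eps by linarith
    moreover have "real (m + 1) \<ge> 1" by simp
    ultimately show ?thesis using mult_mono[of 1 "exp 1 + \<epsilon>" 1 "real (m+1)"] by simp
  qed
  have Mtop: "filterlim (\<lambda>N. real (Mseq N)) at_top sequentially"
  proof (rule filterlim_at_top_mono[OF lnN])
    show "eventually (\<lambda>N. ln (real N) \<le> real (Mseq N)) sequentially"
      using eventually_ge_at_top[of 1]
    proof eventually_elim
      case (elim N)
      then have l0: "ln (real N) \<ge> 0" by simp
      have "ln (real N) \<le> (exp 1 + \<epsilon>) * real (m + 1) * ln (real N)"
        using mult_right_mono[OF coef l0] by simp
      then show ?case using M_lower[of N] by linarith
    qed
  qed
  have ev1: "eventually (\<lambda>N. 1 \<le> Mseq N) sequentially"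
  proof -
    have "eventually (\<lambda>N. 1 \<le> real (Mseq N)) sequentially"
      using Mtop unfolding filterlim_at_top by blast
    then show ?thesis by eventually_elim simp
  qed
  have e1: "eventually (\<lambda>N. real (Mseq N) / real N < 1) sequentially"
    using order_tendstoD(2)[OF M_sublin, of 1] by simp
  have ev2: "eventually (\<lambda>N. Mseq N \<le> N) sequentially"
    using e1 eventually_ge_at_top[of 1]
  proof eventually_elim
    case (elim N)
    then have "real N > 0" by simp
    with elim(1) have "real (Mseq N) < real N" by (simp add: field_simps)
    then show ?case by simp
  qed
  have p0: "p \<longlonglongrightarrow> 0" unfolding p_def
    by (rule tendsto_divide_0[OF tendsto_const filterlim_at_top_imp_at_infinity[OF Mtop]])
  have ev3: "eventually (\<lambda>N. p N \<le> 1) sequentially"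
  proof -
    have "eventually (\<lambda>N. p N < 1) sequentially" using order_tendstoD(2)[OF p0, of 1] by simp
    then show ?thesis by eventually_elim simp
  qed
  have pnn: "\<And>N. p N \<ge> 0" unfolding p_def using Cpos by simp
  define q where "q N = 4 * p N powr \<delta>" for N
  have q0: "q \<longlonglongrightarrow> 0"
  proof -
    have "(\<lambda>N. p N powr \<delta>) \<longlonglongrightarrow> 0"
      by (rule tendsto_zero_powrI[OF p0 tendsto_const]) (use pnn \<delta> in auto)
    from tendsto_mult[OF tendsto_const this, of 4] show ?thesis unfolding q_def by simp
  qed
  have qnn: "\<And>N. q N \<ge> 0" unfolding q_def by simp
  have lim: "(\<lambda>N. q N ^ N) \<longlonglongrightarrow> 0" by (rule pow_seq_zero[OF q0 qnn])
  show "(\<lambda>N. measure (\<Omega> N)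
            {\<omega>\<in>space (\<Omega> N). max_share_frac N (Mseq N) P N0 (\<lambda>n1 n2 k. X N n1 n2 k \<omega>) > \<delta>})
            \<longlonglongrightarrow> 0"
  proof (rule tendsto_sandwich[OF _ _ tendsto_const lim])
    show "eventually (\<lambda>N. 0 \<le> measure (\<Omega> N)
            {\<omega>\<in>space (\<Omega> N). max_share_frac N (Mseq N) P N0 (\<lambda>n1 n2 k. X N n1 n2 k \<omega>) > \<delta>}) sequentially"
      by simp
    show "eventually (\<lambda>N. measure (\<Omega> N)
            {\<omega>\<in>space (\<Omega> N). max_share_frac N (Mseq N) P N0 (\<lambda>n1 n2 k. X N n1 n2 k \<omega>) > \<delta>} \<le> q N ^ N) sequentially"
      using ev1 ev2 ev3
    proof eventually_elim
      case (elim N)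
      have Mpos: "real (Mseq N) > 0" using elim(1) by simp
      have peq: "p N = 2 * real (2*m+1) / real (Mseq N) + 4 * real (2*m+1) / (\<delta> * real (Mseq N))"
        unfolding p_def C_def using Mpos \<delta> by (simp add: field_simps)
      have "measure (\<Omega> N)
            {\<omega>\<in>space (\<Omega> N). max_share_frac N (Mseq N) P N0 (\<lambda>n1 n2 k. X N n1 n2 k \<omega>) > \<delta>}
            \<le> 4 ^ N * p N powr (\<delta> * real N)"
        by (rule per_N_bound[OF prob chan _ P_pos N0_pos \<delta> elim(1) elim(2) peq elim(3)])
           (rule cont)
      also have "\<dots> = q N ^ N"
      proof -
        have ppos: "p N > 0" unfolding p_def using Cpos Mpos by simp
        have "p N powr (\<delta> * real N) = (p N powr \<delta>) powr real N" by (simp add: powr_powr)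
        also have "\<dots> = (p N powr \<delta>) ^ N" using ppos by (intro powr_realpow) simp
        finally show ?thesis unfolding q_def by (simp add: power_mult_distrib)
      qed
      finally show ?case .
    qed
  qed
qed


end
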